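(* For $\phi\in L^\infty$, the slant H-Toeplitz operator $V_\phi$ is compact if and only if $\phi=0$.
   Context: $L^2=L^2(\mathbb{T})$ with orthonormal basis $e_n(z)=z^n$, $n\in\mathbb{Z}$; $H^2$ is the closed span of $\{e_n\}_{n\ge0}$, $P:L^2\to H^2$ the orthogonal projection, $M_\phi$ multiplication by $\phi$. $W:L^2\to L^2$: $We_n=e_{n/2}$ for $n$ even, $0$ for $n$ odd. $K:H^2\to L^2$: $Ke_{2n}=e_n$, $Ke_{2n+1}=e_{-n-1}$ ($n\ge0$). The slant H-Toeplitz operator is $V_\phi=WPM_\phi K:H^2\to H^2$. *)

theory Defs
  imports "HOL-Analysis.Analysis"
begin

text \<open>The circle T is parametrised by t in [0, 2 pi] (z = exp(i t)), with normalised
Lebesgue measure. L^2(T) is identified with square-summable Fourier coefficient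
sequences int => complex via the orthonormal basis e_n (Parseval); H^2 consists of
those sequences vanishing at negative indices.\<close>

definition Linf :: "(real \<Rightarrow> complex) set" where
  "Linf = {\<phi>. \<phi> \<in> borel_measurable (lebesgue_on {0..2*pi}) \<and>
              (\<exists>C. AE t in lebesgue_on {0..2*pi}. norm (\<phi> t) \<le> C)}"

definition fourier_coeff :: "(real \<Rightarrow> complex) \<Rightarrow> int \<Rightarrow> complex" where
  "fourier_coeff \<phi> n = (1 / (2 * pi)) *
     integral\<^sup>L (lebesgue_on {0..2*pi}) (\<lambda>t. \<phi> t * exp (- (\<i> * of_int n * of_real t)))"

definition ell2 :: "(int \<Rightarrow> complex) set" where
  "ell2 = {c. (\<lambda>m. (norm (c m))^2) summable_on UNIV}"

definition H2 :: "(int \<Rightarrow> complex) set" where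
  "H2 = {c \<in> ell2. \<forall>m<0. c m = 0}"

definition l2norm :: "(int \<Rightarrow> complex) \<Rightarrow> real" where
  "l2norm c = sqrt (infsum (\<lambda>m. (norm (c m))^2) UNIV)"

definition Mult :: "(real \<Rightarrow> complex) \<Rightarrow> (int \<Rightarrow> complex) \<Rightarrow> (int \<Rightarrow> complex)" where
  "Mult \<phi> c = (\<lambda>m. infsum (\<lambda>j. fourier_coeff \<phi> (m - j) * c j) UNIV)"

definition Proj :: "(int \<Rightarrow> complex) \<Rightarrow> (int \<Rightarrow> complex)" where
  "Proj c = (\<lambda>m. if m \<ge> 0 then c m else 0)"

text \<open>W e_n = e_(n/2) for n even, 0 for n odd.\<close>
definition Wop :: "(int \<Rightarrow> complex) \<Rightarrow> (int \<Rightarrow> complex)" where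
  "Wop c = (\<lambda>m. c (2 * m))"

text \<open>K e_(2n) = e_n, K e_(2n+1) = e_(-n-1) for n >= 0.\<close>
definition Kop :: "(int \<Rightarrow> complex) \<Rightarrow> (int \<Rightarrow> complex)" where
  "Kop c = (\<lambda>m. if m \<ge> 0 then c (2 * m) else c (- 2 * m - 1))"

definition slant_HT :: "(real \<Rightarrow> complex) \<Rightarrow> (int \<Rightarrow> complex) \<Rightarrow> (int \<Rightarrow> complex)" where
  "slant_HT \<phi> = Wop \<circ> Proj \<circ> Mult \<phi> \<circ> Kop"

definition compact_on_H2 :: "((int \<Rightarrow> complex) \<Rightarrow> (int \<Rightarrow> complex)) \<Rightarrow> bool" where
  "compact_on_H2 T = (\<forall>(f :: nat \<Rightarrow> int \<Rightarrow> complex) (B::real). (\<forall>k. f k \<in> H2 \<and> l2norm (f k) \<le> B) \<longrightarrow>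
      (\<exists>r g. strict_mono r \<and> g \<in> ell2 \<and>
             (\<lambda>k. l2norm (\<lambda>m. T (f (r k)) m - g m)) \<longlonglongrightarrow> 0))"

end

theory Submission
  imports Defs
begin

lemma has_sum_delta: "((\<lambda>j. if j = n then f j else (0::'b::{topological_comm_monoid_add,t2_space})) has_sum f n) UNIV"
  by (rule has_sum_finite_neutralI[of "{n}"]) auto

lemma infsum_delta: "infsum (\<lambda>j. if j = n then f j else (0::'b::{topological_comm_monoid_add,t2_space})) UNIV = f n"
  by (rule infsumI[OF has_sum_delta])
lemma ell2_coord_le:
  assumes "c \<in> ell2" shows "norm (c m) \<le> l2norm c"
proof -
  have s: "(\<lambda>m. (norm (c m))^2) summable_on UNIV" using assms by (simp add: ell2_def)
  have "infsum (\<lambda>m. (norm (c m))^2) {m} \<le> infsum (\<lambda>m. (norm (c m))^2) UNIV"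
    by (rule infsum_mono_neutral[OF summable_on_subset_banach[OF s subset_UNIV] s]) auto
  hence "(norm (c m))^2 \<le> infsum (\<lambda>m. (norm (c m))^2) UNIV" by simp
  hence "sqrt ((norm (c m))^2) \<le> l2norm c" unfolding l2norm_def using real_sqrt_le_mono by blast
  thus ?thesis by simp
qed

lemma ell2_diff:
  assumes "c \<in> ell2" "d \<in> ell2" shows "(\<lambda>m. c m - d m) \<in> ell2"
proof -
  have s: "(\<lambda>m. 2 * (norm (c m))^2 + 2 * (norm (d m))^2) summable_on UNIV"
    using assms unfolding ell2_def
    by (intro summable_on_add summable_on_cmult_right) auto
  have "(norm (c m - d m))^2 \<le> 2 * (norm (c m))^2 + 2 * (norm (d m))^2" for m
  proof -
    have "norm (c m - d m) \<le> norm (c m) + norm (d m)" by (rule norm_triangle_ineq4)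
    hence "(norm (c m - d m))^2 \<le> (norm (c m) + norm (d m))^2"
      by (intro power_mono) auto
    also have "\<dots> \<le> 2 * (norm (c m))^2 + 2 * (norm (d m))^2"
    proof -
      have "0 \<le> (norm (c m) - norm (d m))^2" by simp
      thus ?thesis unfolding power2_sum power2_diff by linarith
    qed
    finally show ?thesis .
  qed
  thus ?thesis unfolding ell2_def
    by (auto intro!: summable_on_comparison_test[OF s])
qed

lemma ell2_shift:
  assumes "a \<in> ell2" shows "(\<lambda>m. if m \<ge> 0 then a (2*m - n) else 0) \<in> ell2"
proof -
  have "(\<lambda>m. (norm (a m))^2) summable_on ((\<lambda>m. 2*m - n) ` UNIV)"
    by (rule summable_on_subset_banach[OF _ subset_UNIV]) (use assms in \<open>simp add: ell2_def\<close>)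
  moreover have "inj (\<lambda>m::int. 2*m - n)" by (auto simp: inj_on_def)
  ultimately have s: "(\<lambda>m. (norm (a (2*m - n)))^2) summable_on UNIV"
    using summable_on_reindex[of "\<lambda>m. 2*m - n" UNIV "\<lambda>m. (norm (a m))^2"] by (simp add: o_def)
  have "(\<lambda>m. (norm (if m \<ge> 0 then a (2*m - n) else 0))^2) summable_on UNIV"
    by (rule summable_on_comparison_test[OF s]) auto
  thus ?thesis unfolding ell2_def by simp
qed

lemma ell2_decay:
  assumes "g \<in> ell2" shows "(\<lambda>k::nat. g (int k + d)) \<longlonglongrightarrow> 0"
proof -
  have "(\<lambda>m. (norm (g m))^2) summable_on ((\<lambda>k. int k + d) ` UNIV)"
    by (rule summable_on_subset_banach[OF _ subset_UNIV]) (use assms in \<open>simp add: ell2_def\<close>)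
  moreover have "inj (\<lambda>k. int k + d)" by (auto simp: inj_on_def)
  ultimately have "(\<lambda>k. (norm (g (int k + d)))^2) summable_on UNIV"
    using summable_on_reindex[of "\<lambda>k. int k + d" UNIV "\<lambda>m. (norm (g m))^2"] by (simp add: o_def)
  hence "summable (\<lambda>k. (norm (g (int k + d)))^2)" by (rule summable_on_imp_summable)
  hence "(\<lambda>k. (norm (g (int k + d)))^2) \<longlonglongrightarrow> 0" by (rule summable_LIMSEQ_zero)
  hence "(\<lambda>k. sqrt ((norm (g (int k + d)))^2)) \<longlonglongrightarrow> sqrt 0" by (intro tendsto_real_sqrt)
  hence "(\<lambda>k. norm (g (int k + d))) \<longlonglongrightarrow> 0" by simp
  thus ?thesis by (simp add: tendsto_norm_zero_iff)
qed

lemma Kop_delta: "n \<ge> 0 \<Longrightarrow> Kop (\<lambda>i. if i = 2*n then 1 else 0) = (\<lambda>i. if i = n then 1 else 0)"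
  unfolding Kop_def
proof (rule ext)
  fix m :: int assume n: "n \<ge> 0"
  show "(if 0 \<le> m then if 2 * m = 2 * n then 1 else 0 else if - 2 * m - 1 = 2 * n then 1 else 0) =
        (if m = n then (1::complex) else 0)"
  proof (cases "0 \<le> m")
    case False
    have "- 2 * m - 1 \<noteq> 2 * n" by presburger
    with False n show ?thesis by auto
  qed auto
qed

lemma Mult_delta: "Mult \<phi> (\<lambda>i. if i = n then 1 else 0) = (\<lambda>k. fourier_coeff \<phi> (k - n))"
proof (rule ext)
  fix k
  have "(\<lambda>j. fourier_coeff \<phi> (k - j) * (if j = n then 1 else 0)) = (\<lambda>j. if j = n then fourier_coeff \<phi> (k - j) else 0)"
    by auto
  thus "Mult \<phi> (\<lambda>i. if i = n then 1 else 0) k = fourier_coeff \<phi> (k - n)"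
    unfolding Mult_def using infsum_delta[of n "\<lambda>j. fourier_coeff \<phi> (k - j)"] by simp
qed

lemma slant_delta: "n \<ge> 0 \<Longrightarrow> slant_HT \<phi> (\<lambda>i. if i = 2*n then 1 else 0) = (\<lambda>m. if m \<ge> 0 then fourier_coeff \<phi> (2*m - n) else 0)"
  unfolding slant_HT_def by (simp add: Kop_delta Mult_delta Proj_def Wop_def)

lemma delta_H2: "n \<ge> 0 \<Longrightarrow> (\<lambda>i. if i = n then 1 else 0) \<in> H2 \<and> l2norm (\<lambda>i. if i = n then 1 else 0) \<le> 1"
proof -
  assume n: "n \<ge> 0"
  have e: "(\<lambda>m. (norm (if m = n then (1::complex) else 0))^2) = (\<lambda>m. if m = n then 1 else 0)"
    by auto
  have "((\<lambda>m. if m = n then (\<lambda>_. 1::real) m else 0) has_sum 1) UNIV"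
    using has_sum_delta[of n "\<lambda>_. 1::real"] by simp
  hence "((\<lambda>m. (norm (if m = n then (1::complex) else 0))^2) has_sum 1) UNIV" by (simp add: e)
  hence s: "(\<lambda>m. (norm (if m = n then (1::complex) else 0))^2) summable_on UNIV"
    and i: "infsum (\<lambda>m. (norm (if m = n then (1::complex) else 0))^2) UNIV = 1"
    using has_sum_imp_summable infsumI by blast+
  show ?thesis unfolding H2_def ell2_def l2norm_def using s i n by auto
qed

lemma coeffs_zero:
  assumes a: "fourier_coeff \<phi> \<in> ell2" and c: "compact_on_H2 (slant_HT \<phi>)"
  shows "fourier_coeff \<phi> j = 0"
proof -
  define a where "a = fourier_coeff \<phi>"
  define q where "q = j mod 2"
  define d where "d = (j + q) div 2"
  have q0: "q \<ge> 0" and d2: "2 * d - q = j" unfolding q_def d_def by auto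
  define f where "f = (\<lambda>k::nat. (\<lambda>i::int. if i = 2*(2*int k + q) then (1::complex) else 0))"
  have fH: "\<forall>k. f k \<in> H2 \<and> l2norm (f k) \<le> 1"
    unfolding f_def using delta_H2 q0 by simp
  obtain r g where r: "strict_mono r" and g: "g \<in> ell2"
    and lim: "(\<lambda>k. l2norm (\<lambda>m. slant_HT \<phi> (f (r k)) m - g m)) \<longlonglongrightarrow> 0"
    using c fH unfolding compact_on_H2_def by blast
  have T: "slant_HT \<phi> (f k) = (\<lambda>m. if m \<ge> 0 then a (2*m - (2*int k + q)) else 0)" for k
    unfolding f_def a_def using slant_delta[of "2*int k + q" \<phi>] q0 by simp
  have ev: "eventually (\<lambda>k. norm (a j) \<le> l2norm (\<lambda>m. slant_HT \<phi> (f (r k)) m - g m) + norm (g (int (r k) + d))) sequentially"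
    unfolding eventually_sequentially
  proof (intro exI allI impI)
    fix k assume k: "k \<ge> nat (- d)"
    have "r k \<ge> k" using r by (simp add: seq_suble)
    hence m0: "int (r k) + d \<ge> 0" using k by linarith
    define m where "m = int (r k) + d"
    have Tm: "slant_HT \<phi> (f (r k)) m = a j"
      using m0 d2 unfolding T m_def by (simp add: algebra_simps)
    have ell: "(\<lambda>m. slant_HT \<phi> (f (r k)) m - g m) \<in> ell2"
      unfolding T using ell2_diff[OF ell2_shift[of a "2*int (r k) + q"] g] a unfolding a_def by simp
    have "norm (a j) \<le> norm (slant_HT \<phi> (f (r k)) m - g m) + norm (g m)"
      using Tm norm_triangle_ineq[of "slant_HT \<phi> (f (r k)) m - g m" "g m"] by simp
    also have "\<dots> \<le> l2norm (\<lambda>m. slant_HT \<phi> (f (r k)) m - g m) + norm (g m)"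
      using ell2_coord_le[OF ell, of m] by simp
    finally show "norm (a j) \<le> l2norm (\<lambda>m. slant_HT \<phi> (f (r k)) m - g m) + norm (g (int (r k) + d))"
      unfolding m_def .
  qed
  have "(\<lambda>k. g (int (r k) + d)) \<longlonglongrightarrow> 0"
    using LIMSEQ_subseq_LIMSEQ[OF ell2_decay[OF g, of d] r] by (simp add: o_def)
  hence "(\<lambda>k. norm (g (int (r k) + d))) \<longlonglongrightarrow> 0" by (simp add: tendsto_norm_zero_iff)
  hence "(\<lambda>k. l2norm (\<lambda>m. slant_HT \<phi> (f (r k)) m - g m) + norm (g (int (r k) + d))) \<longlonglongrightarrow> 0 + 0"
    by (intro tendsto_add lim)
  hence "0 + 0 \<ge> norm (a j)"
    by (rule tendsto_le[OF trivial_limit_sequentially _ tendsto_const ev])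
  hence "norm (a j) \<le> 0" by simp
  thus ?thesis unfolding a_def by simp
qed

lemma fc_zero_AE:
  assumes "AE t in lebesgue_on {0..2*pi}. \<phi> t = 0"
  shows "fourier_coeff \<phi> n = 0"
proof -
  have "AE t in lebesgue_on {0..2*pi}. \<phi> t * exp (- (\<i> * of_int n * of_real t)) = 0"
    using assms by eventually_elim simp
  hence "integral\<^sup>L (lebesgue_on {0..2*pi}) (\<lambda>t. \<phi> t * exp (- (\<i> * of_int n * of_real t))) = 0"
    by (rule integral_eq_zero_AE)
  thus ?thesis unfolding fourier_coeff_def by simp
qed

lemma compact_of_fc_zero:
  assumes "\<And>n. fourier_coeff \<phi> n = 0"
  shows "compact_on_H2 (slant_HT \<phi>)"
proof -
  have T: "slant_HT \<phi> c = (\<lambda>m. 0)" for c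
    unfolding slant_HT_def by (simp add: Mult_def assms Proj_def Wop_def)
  have g: "(\<lambda>m::int. 0::complex) \<in> ell2" unfolding ell2_def by simp
  have l: "l2norm (\<lambda>m::int. 0::complex) = 0" unfolding l2norm_def by simp
  show ?thesis unfolding compact_on_H2_def
    by (intro allI impI exI[of _ id] exI[of _ "\<lambda>m. 0"]) (auto simp: T g l strict_mono_def)
qed

abbreviation LM :: "real measure" where "LM \<equiv> lebesgue_on {0..2*pi}"

definition ee :: "int \<Rightarrow> real \<Rightarrow> complex" where
  "ee k t = exp (\<i> * of_int k * of_real t)"

lemma LM_finite: "finite_measure LM"
  by (rule finite_measure_lebesgue_on) simp

lemma LM_sets: "{0..2*pi} \<in> sets lebesgue" by simp

lemma int_bdd:
  fixes f :: "real \<Rightarrow> 'b::{banach,second_countable_topology}"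
  assumes "f \<in> borel_measurable LM" "\<And>t. t \<in> {0..2*pi} \<Longrightarrow> norm (f t) \<le> B"
  shows "integrable LM f"
  by (rule finite_measure.integrable_const_bound[OF LM_finite, where B=B])
     (use assms in \<open>auto intro!: AE_I2\<close>)

lemma Linf_bound:
  assumes "\<phi> \<in> Linf"
  obtains C where "C \<ge> 0" "AE t in LM. norm (\<phi> t) \<le> C"
proof -
  obtain C where "AE t in LM. norm (\<phi> t) \<le> C" using assms unfolding Linf_def by blast
  hence "AE t in LM. norm (\<phi> t) \<le> max C 0" by eventually_elim auto
  thus ?thesis using that[of "max C 0"] by auto
qed

lemma Linf_meas: "\<phi> \<in> Linf \<Longrightarrow> \<phi> \<in> borel_measurable LM"
  unfolding Linf_def by blast

lemma int_phi_mult: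
  assumes phi: "\<phi> \<in> Linf" and f: "f \<in> borel_measurable LM" and B: "\<And>t. t \<in> {0..2*pi} \<Longrightarrow> norm (f t) \<le> B"
  shows "integrable LM (\<lambda>t. \<phi> t * f t)"
proof -
  obtain C where C: "C \<ge> 0" "AE t in LM. norm (\<phi> t) \<le> C" using Linf_bound[OF phi] by blast
  have m: "(\<lambda>t. \<phi> t * f t) \<in> borel_measurable LM"
    using Linf_meas[OF phi] f by measurable
  have "AE t in LM. norm (\<phi> t * f t) \<le> C * B"
    using C(2)
  proof (rule AE_mp, intro AE_I2 impI)
    fix t assume t: "t \<in> space LM" and n: "norm (\<phi> t) \<le> C"
    have "norm (f t) \<le> B" using B t by simp
    thus "norm (\<phi> t * f t) \<le> C * B" unfolding norm_mult
      using n norm_ge_zero[of "\<phi> t"] norm_ge_zero[of "f t"] by (intro mult_mono) linarith+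
  qed
  thus ?thesis
    by (rule finite_measure.integrable_const_bound[OF LM_finite _ m])
qed

lemma ee_cnj: "cnj (ee k t) = ee (-k) t"
  unfolding ee_def by (simp add: exp_cnj)

lemma ee_mult: "ee k t * ee l t = ee (k + l) t"
  unfolding ee_def by (simp add: exp_add[symmetric] algebra_simps)

lemma ee_norm[simp]: "norm (ee k t) = 1"
proof -
  have "ee k t = exp (\<i> * of_real (of_int k * t))" unfolding ee_def by (simp add: mult.assoc)
  thus ?thesis by (simp only: norm_exp_i_times)
qed

lemma ee_cont[continuous_intros]: "continuous_on S (ee k)"
  unfolding ee_def by (intro continuous_intros)

lemma ee_meas[measurable]: "ee k \<in> borel_measurable LM"
  by (rule continuous_imp_measurable_on_sets_lebesgue[OF ee_cont LM_sets])

lemma ee_integrable: "integrable LM (ee k)"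
  by (rule int_bdd[where B=1]) auto

lemma ee_integral: "integral\<^sup>L LM (ee k) = (if k = 0 then 2*pi else 0)"
proof -
  have "integral\<^sup>L LM (ee k) = integral {0..2*pi} (ee k)"
    by (rule lebesgue_integral_eq_integral[OF ee_integrable LM_sets])
  also have "\<dots> = (if k = 0 then 2*pi else 0)"
  proof (cases "k = 0")
    case True
    have "ee k = (\<lambda>_. 1)" using True by (simp add: ee_def fun_eq_iff)
    then show ?thesis using True by (simp add: scaleR_conv_of_real)
  next
    case False
    have "integral {0..2*pi} (ee k) = integral {0..2*pi} (\<lambda>t. exp ((\<i> * of_int k) * complex_of_real t))"
      unfolding ee_def by simp
    also have "\<dots> = (exp ((\<i> * of_int k) * of_real (2*pi)) - 1) / (\<i> * of_int k)"
      by (rule integral_exp) (use False in auto)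
    also have "exp ((\<i> * of_int k) * of_real (2*pi)) = 1"
    proof -
      have "(\<i> * of_int k) * of_real (2*pi) = (2 * of_int k * of_real pi) * \<i>" by simp
      moreover have "exp ((2 * (of_int k :: complex) * of_real pi) * \<i>) = 1"
        using exp_integer_2pi[of "of_int k"] by simp
      ultimately show ?thesis by (metis (no_types, lifting))
    qed
    finally show ?thesis using False by simp
  qed
  finally show ?thesis .
qed

lemma fc_eq: "fourier_coeff \<phi> n = (1 / (2 * pi)) * integral\<^sup>L LM (\<lambda>t. \<phi> t * ee (-n) t)"
  unfolding fourier_coeff_def ee_def by simp

lemma LM_const: "integral\<^sup>L LM (\<lambda>t. c::real) = 2*pi*c"
proof -
  have "integral\<^sup>L LM (\<lambda>t. c) = integral {0..2*pi} (\<lambda>t. c)"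
    by (rule lebesgue_integral_eq_integral[OF int_bdd[where B="abs c"] LM_sets]) auto
  thus ?thesis by simp
qed

lemma LM_measure: "measure LM {0..2*pi} = 2*pi"
  using LM_const[of 1] by simp

lemma phi_ee: "\<phi> \<in> Linf \<Longrightarrow> integral\<^sup>L LM (\<lambda>t. \<phi> t * ee (-n) t) = 2*pi * fourier_coeff \<phi> n"
  unfolding fc_eq by simp

lemma cnj_sq_gen: "cnj z * (complex_of_real c * z) = of_real (c*(norm z)^2)"
  and cnj_sq_gen2: "z * cnj z * complex_of_real c = of_real (c*(norm z)^2)"
proof -
  have e: "of_real (c*(norm z)^2) = complex_of_real c * (z * cnj z)"
    by (metis complex_norm_square of_real_mult)
  have "cnj z * (complex_of_real c * z) = complex_of_real c * (z * cnj z)" by (simp only: ac_simps)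
  thus "cnj z * (complex_of_real c * z) = of_real (c*(norm z)^2)" using e by metis
  have "z * cnj z * complex_of_real c = complex_of_real c * (z * cnj z)" by (simp only: ac_simps)
  thus "z * cnj z * complex_of_real c = of_real (c*(norm z)^2)" using e by metis
qed

lemma cnj_sq_aux: "cnj z * (2 * complex_of_real pi * z) = of_real (2*pi*(norm z)^2)"
  and cnj_sq_aux2: "z * cnj z * (2 * complex_of_real pi) = of_real (2*pi*(norm z)^2)"
  using cnj_sq_gen[of z "2*pi"] cnj_sq_gen2[of z "2*pi"] by simp_all

lemma bessel_fin:
  assumes phi: "\<phi> \<in> Linf" and C0: "C \<ge> 0" and Cb: "AE t in LM. norm (\<phi> t) \<le> C"
    and F: "finite F"
  shows "(\<Sum>n\<in>F. (norm (fourier_coeff \<phi> n))^2) \<le> C^2"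
proof -
  define a where "a = fourier_coeff \<phi>"
  define s where "s t = (\<Sum>n\<in>F. a n * ee n t)" for t
  define X where "X = (\<Sum>n\<in>F. (norm (a n))^2)"
  have s_meas[measurable]: "s \<in> borel_measurable LM" unfolding s_def by measurable
  have s_bd: "norm (s t) \<le> (\<Sum>n\<in>F. norm (a n))" for t
    unfolding s_def by (rule order_trans[OF norm_sum]) (simp add: norm_mult)
  have cs: "cnj (s t) = (\<Sum>n\<in>F. cnj (a n) * ee (-n) t)" for t
    unfolding s_def by (simp add: ee_cnj)
  have cs_meas: "(\<lambda>t. cnj (s t)) \<in> borel_measurable LM" unfolding cs by measurable
  have ii: "\<And>n. integrable LM (\<lambda>t. \<phi> t * ee (-n) t)"
    by (rule int_phi_mult[OF phi ee_meas, where B=1]) simp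
  have I1: "integral\<^sup>L LM (\<lambda>t. \<phi> t * cnj (s t)) = of_real (2*pi*X)"
  proof -
    have "(\<lambda>t. \<phi> t * cnj (s t)) = (\<lambda>t. \<Sum>n\<in>F. cnj (a n) * (\<phi> t * ee (-n) t))"
      unfolding cs by (simp add: sum_distrib_left algebra_simps)
    hence "integral\<^sup>L LM (\<lambda>t. \<phi> t * cnj (s t)) = (\<Sum>n\<in>F. cnj (a n) * integral\<^sup>L LM (\<lambda>t. \<phi> t * ee (-n) t))"
      using ii by (simp add: Bochner_Integration.integral_sum)
    also have "\<dots> = (\<Sum>n\<in>F. of_real (2*pi * (norm (a n))^2))"
      unfolding phi_ee[OF phi] a_def
      by (intro sum.cong refl) (simp only: cnj_sq_aux cnj_sq_gen)
    also have "\<dots> = of_real (2*pi*X)" unfolding X_def by (simp add: sum_distrib_left)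
    finally show ?thesis .
  qed
  have I2: "integral\<^sup>L LM (\<lambda>t. s t * cnj (s t)) = of_real (2*pi*X)"
  proof -
    have "(\<lambda>t. s t * cnj (s t)) = (\<lambda>t. \<Sum>n\<in>F. \<Sum>m\<in>F. (a n * cnj (a m)) * ee (n - m) t)"
      unfolding cs by (rule ext) (simp add: s_def sum_product ee_mult algebra_simps)
    hence "integral\<^sup>L LM (\<lambda>t. s t * cnj (s t)) = (\<Sum>n\<in>F. \<Sum>m\<in>F. (a n * cnj (a m)) * integral\<^sup>L LM (ee (n - m)))"
      using ee_integrable by (simp add: Bochner_Integration.integral_sum)
    also have "\<dots> = (\<Sum>n\<in>F. \<Sum>m\<in>F. if m = n then (a n * cnj (a m)) * (2*pi) else 0)"
      unfolding ee_integral by (intro sum.cong refl) auto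
    also have "\<dots> = (\<Sum>n\<in>F. of_real (2*pi * (norm (a n))^2))"
      using F by (simp add: cnj_sq_aux2 cnj_sq_gen2)
    also have "\<dots> = of_real (2*pi*X)" unfolding X_def by (simp add: sum_distrib_left)
    finally show ?thesis .
  qed
  have sq_int: "integrable LM (\<lambda>t. (norm (s t))^2)"
    by (rule int_bdd[where B="(\<Sum>n\<in>F. norm (a n))^2"]) (auto intro!: power_mono s_bd)
  have I3: "integral\<^sup>L LM (\<lambda>t. (norm (s t))^2) = 2*pi*X"
  proof -
    have "of_real (integral\<^sup>L LM (\<lambda>t. (norm (s t))^2)) = integral\<^sup>L LM (\<lambda>t. s t * cnj (s t))"
    proof -
      have e: "(\<lambda>t. s t * cnj (s t)) = (\<lambda>t. complex_of_real ((norm (s t))^2))"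
        by (rule ext, rule complex_norm_square[symmetric])
      show ?thesis unfolding e by (rule integral_complex_of_real[symmetric])
    qed
    hence "complex_of_real (integral\<^sup>L LM (\<lambda>t. (norm (s t))^2)) = complex_of_real (2*pi*X)"
      using I2 by simp
    thus ?thesis by (rule of_real_eq_iff[THEN iffD1])
  qed
  have i1: "integrable LM (\<lambda>t. norm (\<phi> t * cnj (s t)))"
  proof (rule integrable_norm)
    show "integrable LM (\<lambda>t. \<phi> t * cnj (s t))"
      by (rule int_phi_mult[OF phi _ , of "\<lambda>t. cnj (s t)" "(\<Sum>n\<in>F. norm (a n))"]) (use s_bd cs_meas in auto)
  qed
  have i2: "integrable LM (\<lambda>t. (C^2 + (norm (s t))^2) / 2)"
    using sq_int by (intro integrable_divide integrable_add) (auto intro: int_bdd[where B="C^2"])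
  have "2*pi*X = norm (integral\<^sup>L LM (\<lambda>t. \<phi> t * cnj (s t)))"
  proof -
    have X0: "X \<ge> 0" unfolding X_def by (simp add: sum_nonneg)
    have "norm (integral\<^sup>L LM (\<lambda>t. \<phi> t * cnj (s t))) = abs (2*pi*X)"
      by (simp only: I1 norm_of_real)
    thus ?thesis using X0 by simp
  qed
  also have "\<dots> \<le> integral\<^sup>L LM (\<lambda>t. norm (\<phi> t * cnj (s t)))"
    by (rule integral_norm_bound)
  also have "\<dots> \<le> integral\<^sup>L LM (\<lambda>t. (C^2 + (norm (s t))^2) / 2)"
  proof (rule integral_mono_AE[OF i1 i2])
    show "AE t in LM. norm (\<phi> t * cnj (s t)) \<le> (C^2 + (norm (s t))^2) / 2"
      using Cb
    proof eventually_elim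
      case (elim t)
      have "norm (\<phi> t * cnj (s t)) \<le> C * norm (s t)"
        unfolding norm_mult complex_mod_cnj using elim by (intro mult_right_mono) auto
      also have "\<dots> \<le> (C^2 + (norm (s t))^2) / 2"
        using sum_squares_bound[of C "norm (s t)"] by simp
      finally show ?case .
    qed
  qed
  also have "\<dots> = (2*pi*C^2 + 2*pi*X) / 2"
    using sq_int I3 by (simp add: LM_const LM_measure int_bdd[where B="C^2"])
  finally have "2*pi*X \<le> (2*pi*C^2 + 2*pi*X) / 2" .
  hence "X \<le> C^2" using pi_gt_zero by (simp add: field_simps)
  thus ?thesis unfolding X_def a_def .
qed

lemma bessel:
  assumes phi: "\<phi> \<in> Linf" shows "fourier_coeff \<phi> \<in> ell2"
proof -
  obtain C where C: "C \<ge> 0" "AE t in LM. norm (\<phi> t) \<le> C" using Linf_bound[OF phi] by blast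
  have "(\<lambda>n. (norm (fourier_coeff \<phi> n))^2) summable_on UNIV"
    by (rule nonneg_bdd_above_summable_on)
       (auto intro!: bdd_aboveI[where M="C^2"] bessel_fin[OF phi C])
  thus ?thesis unfolding ell2_def by simp
qed

inductive_set trig :: "(real \<Rightarrow> complex) set" where
  tmono: "(\<lambda>t. c * ee k t) \<in> trig"
| tadd: "f \<in> trig \<Longrightarrow> g \<in> trig \<Longrightarrow> (\<lambda>t. f t + g t) \<in> trig"

lemma trig_mult_mono: "g \<in> trig \<Longrightarrow> (\<lambda>t. (c * ee k t) * g t) \<in> trig"
proof (induction rule: trig.induct)
  case (tmono d l)
  have "(\<lambda>t. (c * ee k t) * (d * ee l t)) = (\<lambda>t. (c * d) * ee (k + l) t)"
    by (rule ext) (simp add: ee_mult[symmetric] algebra_simps)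
  thus ?case by (simp add: trig.tmono)
next
  case (tadd f g)
  have "(\<lambda>t. (c * ee k t) * (f t + g t)) = (\<lambda>t. (c * ee k t) * f t + (c * ee k t) * g t)"
    by (rule ext) (simp add: algebra_simps)
  thus ?case using tadd trig.tadd by simp
qed

lemma trig_mult: "f \<in> trig \<Longrightarrow> g \<in> trig \<Longrightarrow> (\<lambda>t. f t * g t) \<in> trig"
proof (induction rule: trig.induct)
  case (tmono c k)
  then show ?case by (rule trig_mult_mono)
next
  case (tadd f1 f2)
  have "(\<lambda>t. (f1 t + f2 t) * g t) = (\<lambda>t. f1 t * g t + f2 t * g t)"
    by (rule ext) (simp add: algebra_simps)
  thus ?case using tadd trig.tadd by simp
qed

lemma trig_cont: "f \<in> trig \<Longrightarrow> continuous_on UNIV f"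
  by (induction rule: trig.induct) (auto intro!: continuous_intros)

lemma trig_bdd: "f \<in> trig \<Longrightarrow> \<exists>B. \<forall>t. norm (f t) \<le> B"
proof (induction rule: trig.induct)
  case (tmono c k)
  then show ?case by (intro exI[of _ "norm c"]) (simp add: norm_mult)
next
  case (tadd f g)
  then obtain B1 B2 where "\<forall>t. norm (f t) \<le> B1" "\<forall>t. norm (g t) \<le> B2" by blast
  hence "\<forall>t. norm (f t + g t) \<le> B1 + B2" by (metis add_mono norm_triangle_ineq order_trans)
  thus ?case by blast
qed

lemma trig_orth:
  assumes phi: "\<phi> \<in> Linf" and z: "\<And>n. fourier_coeff \<phi> n = 0" and f: "f \<in> trig"
  shows "integral\<^sup>L LM (\<lambda>t. \<phi> t * f t) = 0"
  using f
proof (induction rule: trig.induct)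
  case (tmono c k)
  have "integral\<^sup>L LM (\<lambda>t. \<phi> t * (c * ee k t)) = c * integral\<^sup>L LM (\<lambda>t. \<phi> t * ee (-(-k)) t)"
    by (simp add: algebra_simps)
  also have "\<dots> = 0" unfolding phi_ee[OF phi] z by simp
  finally show ?case .
next
  case (tadd f g)
  have "integrable LM (\<lambda>t. \<phi> t * h t)" if h: "h \<in> trig" for h
  proof -
    obtain B where "\<forall>t. norm (h t) \<le> B" using trig_bdd[OF h] by blast
    moreover have "h \<in> borel_measurable LM"
      by (rule continuous_imp_measurable_on_sets_lebesgue[OF continuous_on_subset[OF trig_cont[OF h]] LM_sets]) simp
    ultimately show ?thesis using int_phi_mult[OF phi] by blast
  qed
  hence "integral\<^sup>L LM (\<lambda>t. \<phi> t * (f t + g t)) = integral\<^sup>L LM (\<lambda>t. \<phi> t * f t) + integral\<^sup>L LM (\<lambda>t. \<phi> t * g t)"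
    using tadd.hyps by (simp add: distrib_left)
  thus ?case using tadd.IH by simp
qed

definition EE :: "real \<Rightarrow> complex" where "EE t = exp (\<i> * of_real t)"

lemma EE_cis: "EE t = cis t" unfolding EE_def by (simp add: cis_conv_exp)

lemma ee_pm1: "ee 1 t = cis t" "ee (-1) t = cis (-t)"
  unfolding ee_def by (simp_all add: cis_conv_exp)

lemma poly_trig:
  fixes p :: "complex \<Rightarrow> real"
  assumes "real_polynomial_function p"
  shows "(\<lambda>t. complex_of_real (p (EE t))) \<in> trig"
  using assms
proof (induction rule: real_polynomial_function.induct)
  case (linear p)
  have lin: "p z = Re z * p 1 + Im z * p \<i>" for z
  proof -
    have "z = Re z *\<^sub>R 1 + Im z *\<^sub>R \<i>" by (simp add: complex_eq_iff)
    hence "p z = p (Re z *\<^sub>R 1 + Im z *\<^sub>R \<i>)" by (rule arg_cong)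
    also have "\<dots> = Re z *\<^sub>R p 1 + Im z *\<^sub>R p \<i>"
      using bounded_linear.linear[OF linear.hyps] by (simp only: linear_add linear_scale)
    also have "\<dots> = Re z * p 1 + Im z * p \<i>" by simp
    finally show ?thesis .
  qed
  define \<alpha> where "\<alpha> = (complex_of_real (p 1) - \<i> * complex_of_real (p \<i>)) / 2"
  define \<beta> where "\<beta> = (complex_of_real (p 1) + \<i> * complex_of_real (p \<i>)) / 2"
  have "(\<lambda>t. complex_of_real (p (EE t))) = (\<lambda>t. \<alpha> * ee 1 t + \<beta> * ee (-1) t)"
  proof (rule ext)
    fix t
    show "complex_of_real (p (EE t)) = \<alpha> * ee 1 t + \<beta> * ee (-1) t"
      unfolding EE_cis lin[of "cis t"] ee_pm1 \<alpha>_def \<beta>_def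
      by (simp add: complex_eq_iff field_simps)
  qed
  thus ?case by (simp add: trig.tmono trig.tadd)
next
  case (const c)
  have "(\<lambda>t. complex_of_real c) = (\<lambda>t. complex_of_real c * ee 0 t)"
    by (simp add: ee_def)
  thus ?case by (simp add: trig.tmono)
next
  case (add f g)
  thus ?case using trig.tadd by simp
next
  case (mult f g)
  thus ?case using trig_mult by simp
qed

lemma dom_lim:
  assumes phi: "\<phi> \<in> Linf"
    and u_meas: "\<And>k. u k \<in> borel_measurable LM" and u0_meas: "u0 \<in> borel_measurable LM"
    and bd: "\<And>k t. t \<in> {0..2*pi} \<Longrightarrow> abs (u k t) \<le> B"
    and lim: "\<And>t. t \<in> {0..2*pi} \<Longrightarrow> (\<lambda>k. u k t) \<longlonglongrightarrow> u0 t"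
    and z: "\<And>k. integral\<^sup>L LM (\<lambda>t. \<phi> t * of_real (u k t)) = 0"
  shows "integral\<^sup>L LM (\<lambda>t. \<phi> t * of_real (u0 t)) = 0"
proof -
  obtain C where C: "C \<ge> 0" "AE t in LM. norm (\<phi> t) \<le> C" using Linf_bound[OF phi] by blast
  have pm: "\<phi> \<in> borel_measurable LM" by (rule Linf_meas[OF phi])
  have "(\<lambda>k. integral\<^sup>L LM (\<lambda>t. \<phi> t * of_real (u k t))) \<longlonglongrightarrow> integral\<^sup>L LM (\<lambda>t. \<phi> t * of_real (u0 t))"
  proof (rule integral_dominated_convergence[where w = "\<lambda>_. C * B"])
    show "(\<lambda>t. \<phi> t * of_real (u0 t)) \<in> borel_measurable LM" using pm u0_meas by measurable
    show "(\<lambda>t. \<phi> t * of_real (u k t)) \<in> borel_measurable LM" for k using pm u_meas[of k] by measurable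
    show "integrable LM (\<lambda>_. C * B)" by (rule int_bdd[where B="abs (C*B)"]) auto
    show "AE t in LM. (\<lambda>k. \<phi> t * of_real (u k t)) \<longlonglongrightarrow> \<phi> t * of_real (u0 t)"
      by (rule AE_I2) (auto intro!: tendsto_mult tendsto_const tendsto_of_real lim)
    show "AE t in LM. norm (\<phi> t * of_real (u k t)) \<le> C * B" for k
      using C(2)
    proof (rule AE_mp, intro AE_I2 impI)
      fix t assume t: "t \<in> space LM" and n: "norm (\<phi> t) \<le> C"
      have "abs (u k t) \<le> B" using bd t by simp
      thus "norm (\<phi> t * of_real (u k t)) \<le> C * B" unfolding norm_mult norm_of_real
        using n norm_ge_zero[of "\<phi> t"] by (intro mult_mono) linarith+
    qed
  qed
  hence "(\<lambda>k. 0::complex) \<longlonglongrightarrow> integral\<^sup>L LM (\<lambda>t. \<phi> t * of_real (u0 t))" using z by simp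
  thus ?thesis using LIMSEQ_unique[OF tendsto_const] by metis
qed

lemma EE_cont: "continuous_on S EE"
  unfolding EE_def by (intro continuous_intros)

lemma EE_meas[measurable]: "EE \<in> borel_measurable LM"
  by (rule continuous_imp_measurable_on_sets_lebesgue[OF EE_cont LM_sets])

lemma EE_sphere: "EE t \<in> sphere 0 1"
  by (simp add: EE_cis)

lemma cont_orth:
  fixes h :: "complex \<Rightarrow> real"
  assumes phi: "\<phi> \<in> Linf" and z: "\<And>n. fourier_coeff \<phi> n = 0"
    and h: "continuous_on (sphere 0 1) h"
  shows "integral\<^sup>L LM (\<lambda>t. \<phi> t * of_real (h (EE t))) = 0"
proof -
  obtain H where H: "\<And>z. z \<in> sphere 0 1 \<Longrightarrow> norm (h z) \<le> H"
    using compact_imp_bounded[OF compact_continuous_image[OF h compact_sphere]]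
    unfolding bounded_iff by blast
  have "\<forall>k. \<exists>p. polynomial_function p \<and> (\<forall>z\<in>sphere 0 1. norm (h z - p z) < inverse (real (Suc k)))"
    using Stone_Weierstrass_polynomial_function[OF compact_sphere h] by simp
  then obtain P where P1: "\<And>k. polynomial_function (P k)"
    and P2: "\<And>k z. z \<in> sphere 0 1 \<Longrightarrow> norm (h z - P k z) < inverse (real (Suc k))"
    by metis
  have hc: "continuous_on UNIV (\<lambda>t. h (EE t))"
    by (rule continuous_on_compose2[OF h EE_cont]) (use EE_sphere in auto)
  have Pc: "continuous_on UNIV (\<lambda>t. P k (EE t))" for k
    by (rule continuous_on_compose2[OF continuous_on_polymonial_function[OF P1] EE_cont]) auto
  show ?thesis
  proof (rule dom_lim[OF phi, where u = "\<lambda>k t. P k (EE t)" and B = "H + 1"])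
    show "(\<lambda>t. P k (EE t)) \<in> borel_measurable LM" for k
      by (rule continuous_imp_measurable_on_sets_lebesgue[OF continuous_on_subset[OF Pc] LM_sets]) simp
    show "(\<lambda>t. h (EE t)) \<in> borel_measurable LM"
      by (rule continuous_imp_measurable_on_sets_lebesgue[OF continuous_on_subset[OF hc] LM_sets]) simp
    show "abs (P k (EE t)) \<le> H + 1" for k t
    proof -
      have "norm (h (EE t) - P k (EE t)) < inverse (real (Suc k))" using P2 EE_sphere by blast
      moreover have "inverse (real (Suc k)) \<le> 1" by (rule inverse_le_1_iff[THEN iffD2]) simp
      moreover have "norm (h (EE t)) \<le> H" using H EE_sphere by blast
      ultimately show ?thesis by simp
    qed
    show "(\<lambda>k. P k (EE t)) \<longlonglongrightarrow> h (EE t)" for t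
    proof -
      have "(\<lambda>k. P k (EE t) - h (EE t)) \<longlonglongrightarrow> 0"
      proof (rule Lim_null_comparison[OF _ LIMSEQ_inverse_real_of_nat])
        show "\<forall>\<^sub>F k in sequentially. norm (P k (EE t) - h (EE t)) \<le> inverse (real (Suc k))"
        proof (rule always_eventually, intro allI)
          fix k
          have "norm (h (EE t) - P k (EE t)) < inverse (real (Suc k))" using P2[OF EE_sphere] .
          thus "norm (P k (EE t) - h (EE t)) \<le> inverse (real (Suc k))"
            by (simp only: norm_minus_commute[of "P k (EE t)"] less_imp_le)
        qed
      qed
      thus ?thesis by (rule LIM_zero_cancel)
    qed
    show "integral\<^sup>L LM (\<lambda>t. \<phi> t * of_real (P k (EE t))) = 0" for k
      by (rule trig_orth[OF phi z poly_trig]) (simp add: real_polynomial_function_eq P1)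
  qed
qed

lemma closed_orth:
  assumes phi: "\<phi> \<in> Linf" and z: "\<And>n. fourier_coeff \<phi> n = 0"
    and K: "closed K" "K \<noteq> {}"
  shows "integral\<^sup>L LM (\<lambda>t. \<phi> t * of_real (indicator K (EE t))) = 0"
proof (rule dom_lim[OF phi, where u = "\<lambda>k t. max 0 (1 - real (Suc k) * infdist (EE t) K)" and B = 1])
  have Kb[measurable]: "K \<in> sets borel" using K(1) by (rule borel_closed)
  show "(\<lambda>t. indicator K (EE t)) \<in> borel_measurable LM" by measurable
  show "(\<lambda>t. max 0 (1 - real (Suc k) * infdist (EE t) K)) \<in> borel_measurable LM" for k
    by (rule continuous_imp_measurable_on_sets_lebesgue[OF _ LM_sets]) (intro continuous_intros EE_cont)
  show "\<bar>max 0 (1 - real (Suc k) * infdist (EE t) K)\<bar> \<le> 1" for k t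
    using infdist_nonneg[of "EE t" K] by (simp add: abs_le_iff)
  show "(\<lambda>k. max 0 (1 - real (Suc k) * infdist (EE t) K)) \<longlonglongrightarrow> indicator K (EE t)" for t
  proof (cases "EE t \<in> K")
    case True
    hence "infdist (EE t) K = 0" using in_closed_iff_infdist_zero[OF K] by blast
    thus ?thesis using True by simp
  next
    case False
    hence d: "infdist (EE t) K > 0" using infdist_pos_not_in_closed[OF K False] by simp
    obtain N :: nat where N: "1 / infdist (EE t) K < real N" using reals_Archimedean2 by blast
    have "\<forall>\<^sub>F k in sequentially. max 0 (1 - real (Suc k) * infdist (EE t) K) = 0"
      unfolding eventually_sequentially
    proof (intro exI[of _ N] allI impI)
      fix k assume k: "k \<ge> N"
      have "1 < real N * infdist (EE t) K" using N d by (simp add: field_simps)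
      also have "\<dots> \<le> real (Suc k) * infdist (EE t) K" using k d by (intro mult_right_mono) auto
      finally show "max 0 (1 - real (Suc k) * infdist (EE t) K) = 0" by simp
    qed
    thus ?thesis using False by (simp add: tendsto_eventually)
  qed
  show "integral\<^sup>L LM (\<lambda>t. \<phi> t * of_real (max 0 (1 - real (Suc k) * infdist (EE t) K))) = 0" for k
    by (rule cont_orth[OF phi z, of "\<lambda>z. max 0 (1 - real (Suc k) * infdist z K)"]) (intro continuous_intros)
qed

lemma Arg_EE: "0 \<le> t \<Longrightarrow> t < 2*pi \<Longrightarrow> Arg2pi (EE t) = t"
  unfolding EE_def using Arg2pi_exp[of "\<i> * of_real t"] by simp

lemma EE_2pi: "EE (2*pi) = EE 0"
  unfolding EE_cis by simp

lemma null_ends: "AE t in LM. t \<notin> {0, 2*pi}"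
proof (rule AE_not_in)
  show "{0, 2*pi} \<in> null_sets LM"
    by (subst insert_null_sets_lebesgue_on_iff) (auto simp: insert_null_sets_lebesgue_on_iff)
qed

lemma ind_meas: "A \<in> sets borel \<Longrightarrow> (\<lambda>t. indicator A t :: real) \<in> borel_measurable LM"
proof -
  assume A: "A \<in> sets borel"
  have "A \<in> sets lebesgue" using A by (simp add: sets_completionI_sets)
  hence "{0..2*pi} \<inter> A \<in> sets LM" by (auto simp: sets_restrict_space)
  hence "A \<inter> space LM \<in> sets LM" by (simp add: Int_commute)
  thus ?thesis using borel_measurable_indicator_iff[of A LM] by simp
qed

lemma interval_orth:
  assumes phi: "\<phi> \<in> Linf" and z: "\<And>n. fourier_coeff \<phi> n = 0"
  shows "integral\<^sup>L LM (\<lambda>t. \<phi> t * of_real (indicator {a..b} t)) = 0"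
proof (cases "{a..b} \<inter> {0..2*pi} = {}")
  case True
  have "integral\<^sup>L LM (\<lambda>t. \<phi> t * of_real (indicator {a..b} t)) = integral\<^sup>L LM (\<lambda>t. 0::complex)"
    by (rule Bochner_Integration.integral_cong) (use True in \<open>auto simp: indicator_def\<close>)
  thus ?thesis by simp
next
  case False
  define J where "J = {a..b} \<inter> {0..2*pi}"
  define K where "K = EE ` J"
  have cJ: "compact J" unfolding J_def by (intro compact_Int_closed) auto
  have cK: "compact K" unfolding K_def by (rule compact_continuous_image[OF EE_cont cJ])
  have K: "closed K" "K \<noteq> {}" using cK compact_imp_closed False unfolding K_def J_def by auto
  have key: "indicator K (EE t) = (indicator {a..b} t :: real)" if t: "t \<in> {0..2*pi}" "t \<notin> {0, 2*pi}" for t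
  proof -
    have t': "0 < t" "t < 2*pi" using t by auto
    have "EE t \<in> K \<longleftrightarrow> t \<in> {a..b}"
    proof
      assume "EE t \<in> K"
      then obtain s where s: "s \<in> J" "EE t = EE s" unfolding K_def by auto
      show "t \<in> {a..b}"
      proof (cases "s = 2*pi")
        case True
        hence "EE t = EE 0" using s EE_2pi by simp
        hence "Arg2pi (EE t) = Arg2pi (EE 0)" by simp
        hence "t = 0" using Arg_EE[of t] Arg_EE[of 0] t' by simp
        thus ?thesis using t' by simp
      next
        case False
        hence "s < 2*pi" using s unfolding J_def by auto
        hence "Arg2pi (EE s) = s" using s Arg_EE unfolding J_def by auto
        moreover have "Arg2pi (EE t) = t" using Arg_EE t' by simp
        ultimately have "t = s" using s by simp
        thus ?thesis using s unfolding J_def by simp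
      qed
    next
      assume "t \<in> {a..b}"
      thus "EE t \<in> K" unfolding K_def J_def using t by auto
    qed
    thus ?thesis by (simp add: indicator_def)
  qed
  have Kb[measurable]: "K \<in> sets borel" using K(1) by (rule borel_closed)
  have pm[measurable]: "\<phi> \<in> borel_measurable LM" by (rule Linf_meas[OF phi])
  have "integral\<^sup>L LM (\<lambda>t. \<phi> t * of_real (indicator {a..b} t)) = integral\<^sup>L LM (\<lambda>t. \<phi> t * of_real (indicator K (EE t)))"
  proof (rule integral_cong_AE)
    show "(\<lambda>t. \<phi> t * of_real (indicator {a..b} t)) \<in> borel_measurable LM"
      using ind_meas[of "{a..b}"] by measurable
    show "(\<lambda>t. \<phi> t * of_real (indicator K (EE t))) \<in> borel_measurable LM" by measurable
    show "AE t in LM. \<phi> t * of_real (indicator {a..b} t) = \<phi> t * of_real (indicator K (EE t))"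
      using null_ends by (rule AE_mp) (intro AE_I2 impI, simp add: key)
  qed
  also have "\<dots> = 0" by (rule closed_orth[OF phi z K])
  finally show ?thesis .
qed

lemma borel_orth:
  assumes phi: "\<phi> \<in> Linf" and z: "\<And>n. fourier_coeff \<phi> n = 0" and A: "A \<in> sets borel"
  shows "integral\<^sup>L LM (\<lambda>t. \<phi> t * of_real (indicator A t)) = 0"
proof -
  have int: "integrable LM (\<lambda>t. \<phi> t * of_real (indicator A t))" if "A \<in> sets borel" for A
  proof (rule int_phi_mult[OF phi, where B=1])
    show "(\<lambda>t. complex_of_real (indicator A t)) \<in> borel_measurable LM"
      using ind_meas[OF that] by measurable
  qed (simp add: indicator_def)
  have phi0: "integral\<^sup>L LM \<phi> = 0"
  proof -
    have "integral\<^sup>L LM (\<lambda>t. \<phi> t * ee (-0) t) = 0" using phi_ee[OF phi, of 0] z by simp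
    moreover have "(\<lambda>t. \<phi> t * ee (-0) t) = \<phi>" by (simp add: ee_def)
    ultimately show ?thesis by simp
  qed
  show ?thesis
    using A
  proof (induction rule: borel_set_induct)
    case empty
    then show ?case by simp
  next
    case (interval a b)
    show ?case by (rule interval_orth[OF phi z])
  next
    case (compl A)
    have e: "(\<lambda>t. \<phi> t * of_real (indicator (-A) t)) = (\<lambda>t. \<phi> t - \<phi> t * of_real (indicator A t))"
      by (rule ext) (simp add: indicator_def)
    have "integrable LM \<phi>" using int[of UNIV] by simp
    then show ?case unfolding e using int[OF compl.hyps(1)] compl.IH phi0 by simp
  next
    case (union f)
    have fb: "(\<Union>i\<in>I. f i) \<in> sets borel" for I :: "nat set"
      using union.hyps(2) by (intro sets.countable_UN) auto
    show ?case
    proof (rule dom_lim[OF phi, where u = "\<lambda>k t. indicator (\<Union>i<k. f i) t" and B = 1])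
      show "(\<lambda>t. indicator (\<Union>i<k. f i) t :: real) \<in> borel_measurable LM" for k
        using ind_meas[OF fb[of "{..<k}"]] by simp
      show "(\<lambda>t. indicator (\<Union>i. f i) t :: real) \<in> borel_measurable LM" using ind_meas[OF fb[of UNIV]] by simp
      show "\<bar>indicator (\<Union>i<k. f i) t\<bar> \<le> (1::real)" for k t by (simp add: indicator_def)
      show "(\<lambda>k. indicator (\<Union>i<k. f i) t) \<longlonglongrightarrow> (indicator (\<Union>i. f i) t :: real)" for t
        by (rule LIMSEQ_indicator_UN)
      show "integral\<^sup>L LM (\<lambda>t. \<phi> t * of_real (indicator (\<Union>i<k. f i) t)) = 0" for k
      proof (induction k)
        case 0
        then show ?case by simp
      next
        case (Suc k)
        have U: "(\<Union>i<Suc k. f i) = (\<Union>i<k. f i) \<union> f k" by (auto simp: lessThan_Suc)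
        have D: "(\<Union>i<k. f i) \<inter> f k = {}"
          using union.hyps(1) unfolding disjoint_family_on_def by (auto dest: less_imp_neq)
        have e: "(\<lambda>t. \<phi> t * of_real (indicator (\<Union>i<Suc k. f i) t)) =
            (\<lambda>t. \<phi> t * of_real (indicator (\<Union>i<k. f i) t) + \<phi> t * of_real (indicator (f k) t))"
        proof (rule ext)
          fix t
          have "indicator ((\<Union>i<k. f i) \<union> f k) t = (indicator (\<Union>i<k. f i) t + indicator (f k) t :: real)"
            using D by (auto simp: indicator_def)
          thus "\<phi> t * of_real (indicator (\<Union>i<Suc k. f i) t) =
            \<phi> t * of_real (indicator (\<Union>i<k. f i) t) + \<phi> t * of_real (indicator (f k) t)"
            unfolding U by (simp add: distrib_left)
        qed
        show ?case unfolding e using int[OF fb[of "{..<k}"]] int[OF union.hyps(2)[of k]] Suc.IH union.IH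
          by simp
      qed
    qed
  qed
qed

lemma uniq:
  assumes phi: "\<phi> \<in> Linf" and z: "\<And>n. fourier_coeff \<phi> n = 0"
  shows "AE t in LM. \<phi> t = 0"
proof -
  have "integrable LM (\<lambda>t. \<phi> t * 1)" by (rule int_phi_mult[OF phi, where B=1]) auto
  hence int: "integrable LM \<phi>" by simp
  have pm[measurable]: "\<phi> \<in> borel_measurable LM" by (rule Linf_meas[OF phi])
  interpret finite_measure LM by (rule LM_finite)
  show ?thesis
  proof (rule density_zero[OF int])
    fix A assume "A \<in> sets LM"
    then obtain B where B: "B \<in> sets lebesgue" "A = {0..2*pi} \<inter> B" by (auto simp: sets_restrict_space)
    then obtain S N N' where SN: "B = S \<union> N" "N \<subseteq> N'" "N' \<in> null_sets lborel" "S \<in> sets lborel"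
      using sets_completionE by blast
    have Sb: "S \<in> sets borel" using SN(4) by simp
    have "AE t in lebesgue. t \<notin> N'" by (rule AE_not_in) (rule null_sets_completionI[OF SN(3)])
    hence ae: "AE t in LM. t \<notin> N'"
      by (subst AE_restrict_space_iff) (auto elim: AE_mp)
    have Am: "(\<lambda>t. indicator A t :: real) \<in> borel_measurable LM"
      using \<open>A \<in> sets LM\<close> by (simp add: borel_measurable_indicator)
    have "set_lebesgue_integral LM A \<phi> = integral\<^sup>L LM (\<lambda>t. indicator A t *\<^sub>R \<phi> t)"
      by (simp add: set_lebesgue_integral_def)
    also have "\<dots> = integral\<^sup>L LM (\<lambda>t. \<phi> t * of_real (indicator S t))"
    proof (rule integral_cong_AE)
      show "(\<lambda>t. indicator A t *\<^sub>R \<phi> t) \<in> borel_measurable LM" using Am by measurable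
      show "(\<lambda>t. \<phi> t * of_real (indicator S t)) \<in> borel_measurable LM"
        using ind_meas[OF Sb] by measurable
      show "AE t in LM. indicator A t *\<^sub>R \<phi> t = \<phi> t * of_real (indicator S t)"
        using ae
      proof (rule AE_mp, intro AE_I2 impI)
        fix t assume t: "t \<in> space LM" "t \<notin> N'"
        have "t \<in> A \<longleftrightarrow> t \<in> S" using t B SN by auto
        thus "indicator A t *\<^sub>R \<phi> t = \<phi> t * of_real (indicator S t)"
          by (simp add: indicator_def scaleR_conv_of_real)
      qed
    qed
    also have "\<dots> = 0" by (rule borel_orth[OF phi z Sb])
    finally show "set_lebesgue_integral LM A \<phi> = 0" .
  qed
qed

theorem mainTheorem7:
  fixes \<phi> :: "real \<Rightarrow> complex"
  assumes "\<phi> \<in> Linf"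
  shows "compact_on_H2 (slant_HT \<phi>) \<longleftrightarrow> (AE t in lebesgue_on {0..2*pi}. \<phi> t = 0)"
proof
  assume c: "compact_on_H2 (slant_HT \<phi>)"
  have "\<And>n. fourier_coeff \<phi> n = 0" by (rule coeffs_zero[OF bessel[OF assms] c])
  thus "AE t in lebesgue_on {0..2*pi}. \<phi> t = 0" by (rule uniq[OF assms])
next
  assume "AE t in lebesgue_on {0..2*pi}. \<phi> t = 0"
  hence "\<And>n. fourier_coeff \<phi> n = 0" by (rule fc_zero_AE)
  thus "compact_on_H2 (slant_HT \<phi>)" by (rule compact_of_fc_zero)
qed

end
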